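(* Let $\xi$ be a pure-like mixture (as defined in the context, in particular not of the form $x^p$). Then for sufficiently small $\varepsilon>0$ there exists a constant $\alpha>0$ such that $$F(x,y)<0\quad\text{for all }x\in(-E_0-\varepsilon,-E_0+\varepsilon),\ y\in\mathbb R\setminus(-y_0-\alpha\sqrt\varepsilon,-y_0+\alpha\sqrt\varepsilon),$$ and there exists a constant $\beta>0$ such that $$F(x,y)<\beta\sqrt\varepsilon\quad\text{for all }x\in(-E_0-\varepsilon,-E_0+\varepsilon),\ y\in(-y_0-\alpha\sqrt\varepsilon,-y_0+\alpha\sqrt\varepsilon).$$
   Context: $\xi(x)=\sum_{p\ge2}\gamma_p^2x^p$ with deterministic $\gamma_p$, $\sum_{p\ge2}2^p\gamma_p^2<\infty$ and $\xi(1)=1$; write $\xi'=\xi'(1)$, $\xi''=\xi''(1)$. $\xi$ is called pure-like if $G:=\log\frac{\xi''}{\xi'}-\frac{(\xi''-\xi')(\xi''-\xi'+\xi'^2)}{\xi''\xi'^2}>0$; here it is also assumed that $\xi$ is a genuine mixture (not $x^p$), so that $\xi''+\xi'-\xi'^2>0$. Let $\sigma_{\mathrm{sc}}$ be the standard semicircle law (density $\frac1{2\pi}\sqrt{4-t^2}$ on $[-2,2]$) and $\Psi_*(x)=\int\log|x-t|\,\sigma_{\mathrm{sc}}(dt)$, i.e. $\Psi_*(x)=\frac{x^2}4-\frac12$ for $|x|\le2$ and $\Psi_*(x)=\frac{x^2}4-\frac12-\big[\frac{|x|}4\sqrt{x^2-4}-\log(\sqrt{x^2/4-1}+|x|/2)\big]$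 for $|x|>2$. Define $$F(x,y)=\tfrac12+\tfrac12\log\tfrac{\xi''}{\xi'}-\tfrac{x^2}2-\frac{(y-\xi'x)^2}{2(\xi''+\xi'-\xi'^2)}+\Psi_*\Big(\frac{y}{\sqrt{\xi''}}\Big).$$ Let $-E_0=\min\{x:\sup_{y\in\mathbb R}F(x,y)=0\}$ and let $-y_0$ be the maximizer of $y\mapsto F(-E_0,y)$ (which for pure-like $\xi$ is unique and satisfies $-y_0<-2\sqrt{\xi''}$). *)

theory Defs
  imports "HOL-Analysis.Analysis"
begin

definition xi :: "(nat \<Rightarrow> real) \<Rightarrow> real \<Rightarrow> real" where
  "xi \<gamma> x = (\<Sum>p. (if 2 \<le> p then (\<gamma> p)\<^sup>2 * x ^ p else 0))"

definition xi1 :: "(nat \<Rightarrow> real) \<Rightarrow> real" where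
  "xi1 \<gamma> = deriv (xi \<gamma>) 1"

definition xi2 :: "(nat \<Rightarrow> real) \<Rightarrow> real" where
  "xi2 \<gamma> = deriv (deriv (xi \<gamma>)) 1"

definition pure_like :: "(nat \<Rightarrow> real) \<Rightarrow> bool" where
  "pure_like \<gamma> \<longleftrightarrow>
     ln (xi2 \<gamma> / xi1 \<gamma>)
     - (xi2 \<gamma> - xi1 \<gamma>) * (xi2 \<gamma> - xi1 \<gamma> + (xi1 \<gamma>)\<^sup>2)
       / (xi2 \<gamma> * (xi1 \<gamma>)\<^sup>2) > 0"

text \<open>Psi_*(x) = integral of log|x-t| against the semicircle law, explicit form.\<close>
definition Psi_star :: "real \<Rightarrow> real" where
  "Psi_star x = (if \<bar>x\<bar> \<le> 2 then x\<^sup>2 / 4 - 1/2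
     else x\<^sup>2 / 4 - 1/2 - (\<bar>x\<bar> / 4 * sqrt (x\<^sup>2 - 4)
                               - ln (sqrt (x\<^sup>2 / 4 - 1) + \<bar>x\<bar> / 2)))"

definition Fxi :: "(nat \<Rightarrow> real) \<Rightarrow> real \<Rightarrow> real \<Rightarrow> real" where
  "Fxi \<gamma> x y = 1/2 + 1/2 * ln (xi2 \<gamma> / xi1 \<gamma>) - x\<^sup>2 / 2
     - (y - xi1 \<gamma> * x)\<^sup>2 / (2 * (xi2 \<gamma> + xi1 \<gamma> - (xi1 \<gamma>)\<^sup>2))
     + Psi_star (y / sqrt (xi2 \<gamma>))"

definition mE0 :: "(nat \<Rightarrow> real) \<Rightarrow> real" where
  "mE0 \<gamma> = (LEAST x. (SUP y. Fxi \<gamma> x y) = 0)"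

text \<open>my0 = -y_0 = the (unique) maximizer of y \<mapsto> F(-E_0, y).\<close>
definition my0 :: "(nat \<Rightarrow> real) \<Rightarrow> real" where
  "my0 \<gamma> = (THE y. \<forall>z. Fxi \<gamma> (mE0 \<gamma>) z \<le> Fxi \<gamma> (mE0 \<gamma>) y)"

end

theory Submission
  imports Defs
begin
lemma xi_series:
  fixes \<gamma> :: "nat \<Rightarrow> real"
  assumes summ: "summable (\<lambda>p. (if 2 \<le> p then 2 ^ p * (\<gamma> p)\<^sup>2 else 0))"
  defines "w \<equiv> (\<lambda>p. if 2 \<le> p then (\<gamma> p)\<^sup>2 else 0)"
  shows "(\<lambda>p. real p * w p) sums xi1 \<gamma>"
    and "(\<lambda>p. (real p - 1) * real p * w p) sums xi2 \<gamma>"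
proof -
  have xe: "xi \<gamma> = (\<lambda>x. \<Sum>p. w p * x ^ p)"
    unfolding xi_def w_def by (rule ext) (intro suminf_cong, simp)
  have s2: "summable (\<lambda>n. w n * 2 ^ n)"
  proof -
    have "(\<lambda>n. w n * 2 ^ n) = (\<lambda>p. (if 2 \<le> p then 2 ^ p * (\<gamma> p)\<^sup>2 else 0))"
      by (auto simp: w_def fun_eq_iff)
    then show ?thesis using summ by simp
  qed
  have sK: "summable (\<lambda>n. w n * z ^ n)" if "norm z < 2" for z :: real
    using powser_inside[OF s2, of z] that by simp
  have d1: "DERIV (xi \<gamma>) x :> (\<Sum>n. diffs w n * x^n)" if "norm x < 2" for x :: real
    unfolding xe using termdiffs_strong[OF s2, of x] that by simp
  have sD: "summable (\<lambda>n. diffs w n * z ^ n)" if "norm z < 2" for z :: real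
    by (rule termdiff_converges[OF that sK])
  have s32: "summable (\<lambda>n. diffs w n * (3/2) ^ n)" using sD[of "3/2"] by simp
  have d2: "DERIV (\<lambda>x. \<Sum>n. diffs w n * x^n) 1 :> (\<Sum>n. diffs (diffs w) n * 1^n)"
    using termdiffs_strong[OF s32, of 1] by simp
  have ev: "eventually (\<lambda>x. deriv (xi \<gamma>) x = (\<Sum>n. diffs w n * x^n)) (nhds (1::real))"
  proof -
    have "eventually (\<lambda>x. x \<in> ball (1::real) 1) (nhds 1)"
      by (intro eventually_nhds_in_open) auto
    then show ?thesis
    proof (rule eventually_mono)
      fix x :: real assume "x \<in> ball 1 1"
      then have "norm x < 2" by (auto simp: dist_real_def)
      then show "deriv (xi \<gamma>) x = (\<Sum>n. diffs w n * x^n)" using d1 DERIV_imp_deriv by blast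
    qed
  qed
  have a: "xi1 \<gamma> = (\<Sum>n. diffs w n * 1^n)"
    unfolding xi1_def using d1[of 1] DERIV_imp_deriv by simp
  have b: "xi2 \<gamma> = (\<Sum>n. diffs (diffs w) n * 1^n)"
    unfolding xi2_def using deriv_cong_ev[OF ev refl] d2 DERIV_imp_deriv by simp
  have "(\<lambda>n. of_nat n * w n * 1^(n - Suc 0)) sums (\<Sum>n. diffs w n * 1^n)"
    by (rule diffs_equiv) (use sD[of 1] in simp)
  then show "(\<lambda>p. real p * w p) sums xi1 \<gamma>" using a by simp
  have "(\<lambda>n. of_nat n * diffs w n * 1^(n - Suc 0)) sums (\<Sum>n. diffs (diffs w) n * 1^n)"
    by (rule diffs_equiv) (use termdiff_converges[of 1 2 "diffs w", OF _ sD] in simp)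
  then have "(\<lambda>n. real n * (real (Suc n) * w (Suc n))) sums xi2 \<gamma>" using b by (simp add: diffs_def)
  then have "(\<lambda>n. (\<lambda>p. (real p - 1) * real p * w p) (Suc n)) sums xi2 \<gamma>"
    by (simp add: algebra_simps)
  from sums_Suc[OF this] show "(\<lambda>p. (real p - 1) * real p * w p) sums xi2 \<gamma>" by simp
qed

lemma xi_facts:
  fixes \<gamma> :: "nat \<Rightarrow> real"
  assumes summ: "summable (\<lambda>p. (if 2 \<le> p then 2 ^ p * (\<gamma> p)\<^sup>2 else 0))"
    and norm: "xi \<gamma> 1 = 1"
    and mixture: "\<not> (\<exists>p::nat. \<forall>x. xi \<gamma> x = x ^ p)"
  shows "xi1 \<gamma> \<ge> 2" "xi2 \<gamma> \<ge> xi1 \<gamma>" "xi2 \<gamma> + xi1 \<gamma> - (xi1 \<gamma>)\<^sup>2 > 0"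
proof -
  define w where "w = (\<lambda>p. if 2 \<le> p then (\<gamma> p)\<^sup>2 else (0::real))"
  define a where "a = xi1 \<gamma>"
  define b where "b = xi2 \<gamma>"
  have sa: "(\<lambda>p. real p * w p) sums a" using xi_series(1)[OF summ] unfolding w_def a_def .
  have sb: "(\<lambda>p. (real p - 1) * real p * w p) sums b" using xi_series(2)[OF summ] unfolding w_def b_def .
  have w0: "w p \<ge> 0" for p unfolding w_def by auto
  have xe: "xi \<gamma> x = (\<Sum>p. w p * x ^ p)" for x
    unfolding xi_def w_def by (intro suminf_cong, simp)
  have s2: "summable (\<lambda>n. w n * 2 ^ n)"
  proof -
    have "(\<lambda>n. w n * 2 ^ n) = (\<lambda>p. (if 2 \<le> p then 2 ^ p * (\<gamma> p)\<^sup>2 else 0))"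
      by (auto simp: w_def fun_eq_iff)
    then show ?thesis using summ by simp
  qed
  have "summable (\<lambda>n. w n * 1 ^ n)" using powser_inside[OF s2, of 1] by simp
  then have sw: "w sums 1" using norm xe[of 1] by (simp add: sums_iff)
  have "(\<lambda>p. 2 * w p) sums (2 * 1)" by (rule sums_mult[OF sw])
  moreover have "2 * w p \<le> real p * w p" for p
  proof (cases "2 \<le> p")
    case True
    then have "2 \<le> real p" by simp
    then show ?thesis using w0[of p] by (rule mult_right_mono)
  qed (simp add: w_def)
  ultimately have "2 * 1 \<le> a" by (intro sums_le[OF _ _ sa]) auto
  then show "xi1 \<gamma> \<ge> 2" unfolding a_def by simp
  have "real p * w p \<le> (real p - 1) * real p * w p" for p
  proof (cases "2 \<le> p")
    case True
    then have "1 * real p \<le> (real p - 1) * real p" by (intro mult_right_mono) auto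
    then show ?thesis using w0[of p] by (intro mult_right_mono) auto
  qed (simp add: w_def)
  then have "a \<le> b" by (intro sums_le[OF _ sa sb]) auto
  then show "xi2 \<gamma> \<ge> xi1 \<gamma>" unfolding a_def b_def by simp
  have "(\<lambda>p. ((real p - 1) * real p * w p + real p * w p) - 2 * a * (real p * w p) + a\<^sup>2 * w p)
        sums ((b + a) - 2 * a * a + a\<^sup>2 * 1)"
  proof -
    have 1: "(\<lambda>p. (real p - 1) * real p * w p + real p * w p) sums (b + a)" using sums_add[OF sb sa] .
    have 2: "(\<lambda>p. 2 * a * (real p * w p)) sums (2 * a * a)" using sums_mult[OF sa, of "2*a"] .
    have 3: "(\<lambda>p. a\<^sup>2 * w p) sums (a\<^sup>2 * 1)" using sums_mult[OF sw, of "a\<^sup>2"] .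
    show ?thesis using sums_add[OF sums_diff[OF 1 2] 3] .
  qed
  then have sc: "(\<lambda>p. (real p - a)\<^sup>2 * w p) sums (b + a - a\<^sup>2)"
    by (simp add: algebra_simps power2_eq_square)
  have cnn: "b + a - a\<^sup>2 \<ge> 0" using sums_le[OF _ sums_zero sc] w0 by simp
  show "xi2 \<gamma> + xi1 \<gamma> - (xi1 \<gamma>)\<^sup>2 > 0"
  proof (rule ccontr)
    assume "\<not> ?thesis"
    then have c0: "b + a - a\<^sup>2 = 0" using cnn unfolding a_def b_def by simp
    have "suminf (\<lambda>p. (real p - a)\<^sup>2 * w p) = 0" using sc c0 sums_unique by metis
    then have all0: "\<forall>p. (real p - a)\<^sup>2 * w p = 0"
      using suminf_eq_zero_iff[OF sums_summable[OF sc]] w0 by simp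
    obtain p where wp: "w p \<noteq> 0"
    proof (cases "\<exists>p. w p \<noteq> 0")
      case False
      then have "w = (\<lambda>_. 0)" by auto
      then have "w sums 0" by simp
      then have "(1::real) = 0" using sw sums_unique2 by blast
      then show ?thesis by simp
    qed blast
    then have pa: "real p = a" using all0 by auto
    have wq: "w q = 0" if "q \<noteq> p" for q
    proof -
      have "real q \<noteq> a" using pa that by simp
      then show ?thesis using all0 by auto
    qed
    have "(\<lambda>q. if q = p then w q else 0) sums w p" by (rule sums_single)
    moreover have "(\<lambda>q. if q = p then w q else 0) = w" using wq by auto
    ultimately have w1: "w p = 1" using sw sums_unique2 by force
    have "\<forall>x. xi \<gamma> x = x ^ p"
    proof
      fix x :: real
      have "(\<lambda>q. if q = p then x ^ q else 0) sums x ^ p" by (rule sums_single)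
      moreover have "(\<lambda>q. w q * x ^ q) = (\<lambda>q. if q = p then x ^ q else 0)"
        using wq w1 by auto
      ultimately show "xi \<gamma> x = x ^ p" using xe by (simp add: sums_iff)
    qed
    then show False using mixture by blast
  qed
qed

definition gg :: "real \<Rightarrow> real" where
  "gg r = r / 4 * sqrt (r\<^sup>2 - 4) - ln ((sqrt (r\<^sup>2 - 4) + r) / 2)"

lemma gg_deriv:
  assumes r: "r > 2"
  shows "DERIV gg r :> sqrt (r\<^sup>2 - 4) / 2"
proof -
  have "(r-2)*(r+2) > 0" using r by simp
  then have p: "r\<^sup>2 - 4 > 0" by (simp add: algebra_simps power2_eq_square)
  define s where "s = sqrt (r\<^sup>2 - 4)"
  have sp: "s > 0" using p unfolding s_def by simp
  have ss: "s * s = r * r - 4" unfolding s_def using p by (simp add: power2_eq_square[symmetric])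
  have sr: "0 < s + r" using sp r by simp
  have e: "(s * 4 + inverse s * r * r * 4) / 16 - (4 * (inverse s * r) + 4) / (s * 4 + r * 4) = s / 2"
  proof -
    have "(4 * (inverse s * r) + 4) / (s * 4 + r * 4) = inverse s"
    proof -
      have nz: "s * (s + r) \<noteq> 0" using sp sr by simp
      show ?thesis using nz sp sr by (simp add: field_simps)
    qed
    moreover have "(s * 4 + inverse s * r * r * 4) / 16 = (s * s + r * r) / (4 * s)"
      using sp by (simp add: field_simps)
    moreover have "(s * s + r * r) / (4 * s) - inverse s = s / 2"
    proof -
      have "r * r = s * s + 4" using ss by simp
      then have "(s * s + r * r) / (4 * s) = (2 * (s * s) + 4) / (4 * s)" by simp
      also have "\<dots> = s / 2 + inverse s" using sp by (simp add: field_simps)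
      finally show ?thesis by simp
    qed
    ultimately show ?thesis by linarith
  qed
  show ?thesis
    unfolding gg_def
    using p r sr e unfolding s_def by (auto intro!: derivative_eq_intros)
qed

lemma gg2: "gg 2 = 0" unfolding gg_def by simp

lemma sq4: "2 \<le> \<bar>t\<bar> \<Longrightarrow> 4 \<le> (t::real)\<^sup>2"
proof -
  assume "2 \<le> \<bar>t\<bar>"
  then have "2\<^sup>2 \<le> \<bar>t\<bar>\<^sup>2" by (intro power_mono) auto
  then show ?thesis by simp
qed

lemma sqrt4_nonneg: "2 \<le> \<bar>t\<bar> \<Longrightarrow> 0 \<le> sqrt ((t::real)\<^sup>2 - 4)"
  using sq4 by simp

lemma gg_ge2_pos: "r \<ge> 2 \<Longrightarrow> (sqrt (r\<^sup>2 - 4) + r) / 2 > 0"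
proof -
  assume r: "r \<ge> 2"
  have "2\<^sup>2 \<le> r\<^sup>2" using r by (intro power_mono) auto
  then have "sqrt (r\<^sup>2 - 4) \<ge> 0" by simp
  then have "sqrt (r\<^sup>2 - 4) + r > 0" using r by linarith
  then show ?thesis by simp
qed

definition om :: "real \<Rightarrow> real" where
  "om t = (if \<bar>t\<bar> \<le> 2 then 0 else gg \<bar>t\<bar>)"

definition omd :: "real \<Rightarrow> real" where
  "omd t = (if t > 2 then sqrt (t\<^sup>2 - 4) / 2 else if t < -2 then - sqrt (t\<^sup>2 - 4) / 2 else 0)"

lemma om_even: "om (-t) = om t" unfolding om_def by simp

lemma Psi_om: "Psi_star t = t\<^sup>2 / 4 - 1/2 - om t"
proof -
  have X: "sqrt (t\<^sup>2 / 4 - 1) = sqrt (t\<^sup>2 - 4) / 2"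
  proof -
    have "sqrt (t\<^sup>2 / 4 - 1) * 2 = sqrt (t\<^sup>2 / 4 - 1) * sqrt 4"
      using real_sqrt_unique[of 2 4] by simp
    also have "\<dots> = sqrt ((t\<^sup>2 / 4 - 1) * 4)" by (simp only: real_sqrt_mult)
    also have "(t\<^sup>2 / 4 - 1) * 4 = t\<^sup>2 - 4" by simp
    finally show ?thesis by simp
  qed
  then have E: "(sqrt (t\<^sup>2 - 4) + \<bar>t\<bar>) / 2 = sqrt (t\<^sup>2 / 4 - 1) + \<bar>t\<bar> / 2" unfolding X by (simp add: add_divide_distrib)
  have "gg \<bar>t\<bar> = \<bar>t\<bar> / 4 * sqrt (t\<^sup>2 - 4) - ln (sqrt (t\<^sup>2 / 4 - 1) + \<bar>t\<bar> / 2)"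
    unfolding gg_def power2_abs E by (rule refl)
  then show ?thesis unfolding Psi_star_def om_def by simp
qed

lemma gg_right_bound:
  assumes h: "h > 0"
  shows "0 \<le> gg (2 + h) / h \<and> gg (2 + h) / h \<le> sqrt ((2 + h)\<^sup>2 - 4) / 2"
proof -
  have cont: "continuous_on {2..2+h} gg"
    unfolding gg_def using gg_ge2_pos by (intro continuous_intros) force+
  have dif: "gg differentiable (at x)" if "2 < x" "x < 2 + h" for x
    using gg_deriv[of x] that real_differentiable_def by blast
  obtain l z where lz: "2 < z" "z < 2 + h" "DERIV gg z :> l" "gg (2 + h) - gg 2 = (2 + h - 2) * l"
    using MVT[OF _ cont dif] h by auto
  have l: "l = sqrt (z\<^sup>2 - 4) / 2" using DERIV_unique[OF lz(3) gg_deriv[OF lz(1)]] .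
  have q: "gg (2 + h) / h = l" using lz(4) h by (simp add: gg2)
  have "z\<^sup>2 \<le> (2 + h)\<^sup>2" using lz(1,2) by (intro power_mono) auto
  then have "sqrt (z\<^sup>2 - 4) \<le> sqrt ((2 + h)\<^sup>2 - 4)" by simp
  moreover have "z\<^sup>2 \<ge> 4"
  proof -
    have "2\<^sup>2 \<le> z\<^sup>2" using lz(1) by (intro power_mono) auto
    then show ?thesis by simp
  qed
  ultimately show ?thesis unfolding q l by simp
qed

lemma om_deriv2: "DERIV om 2 :> 0"
proof -
  have L: "((\<lambda>h. (om (2 + h) - om 2) / h) \<longlongrightarrow> 0) (at_left 0)"
  proof -
    have "eventually (\<lambda>h. h \<in> {-4<..<0}) (at_left (0::real))" by (rule eventually_at_left_real) simp
    then have "eventually (\<lambda>h. (om (2 + h) - om 2) / h = 0) (at_left (0::real))"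
      by (rule eventually_mono) (auto simp: om_def)
    from tendsto_cong[OF this] show ?thesis by simp
  qed
  have R: "((\<lambda>h. (om (2 + h) - om 2) / h) \<longlongrightarrow> 0) (at_right 0)"
  proof (rule tendsto_sandwich[of "\<lambda>_. 0" _ _ "\<lambda>h. sqrt ((2 + h)\<^sup>2 - 4) / 2"])
    have ev: "eventually (\<lambda>h. h \<in> {0<..<1}) (at_right (0::real))" by (rule eventually_at_right_real) simp
    have e2: "(om (2 + h) - om 2) / h = gg (2 + h) / h" if "h \<in> {0<..<1}" for h
      using that by (simp add: om_def)
    show "eventually (\<lambda>h. 0 \<le> (om (2 + h) - om 2) / h) (at_right 0)"
      using ev by (rule eventually_mono) (use e2 gg_right_bound in auto)
    show "eventually (\<lambda>h. (om (2 + h) - om 2) / h \<le> sqrt ((2 + h)\<^sup>2 - 4) / 2) (at_right 0)"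
      using ev by (rule eventually_mono) (use e2 gg_right_bound in auto)
    show "((\<lambda>_. 0::real) \<longlongrightarrow> 0) (at_right 0)" by simp
    have "((\<lambda>h. sqrt ((2 + h)\<^sup>2 - 4) / 2) \<longlongrightarrow> sqrt ((2 + 0)\<^sup>2 - 4) / 2) (at_right (0::real))"
      by (intro tendsto_intros) auto
    then show "((\<lambda>h. sqrt ((2 + h)\<^sup>2 - 4) / 2) \<longlongrightarrow> 0) (at_right 0)" by simp
  qed
  show ?thesis unfolding DERIV_def using L R filterlim_at_split by blast
qed

lemma om_deriv: "DERIV om t :> omd t"
proof -
  consider "t > 2" | "t < -2" | "\<bar>t\<bar> < 2" | "t = 2" | "t = -2" by linarith
  then show ?thesis
  proof cases
    case 1
    have d: "DERIV gg t :> omd t" using gg_deriv[OF 1] 1 by (simp add: omd_def)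
    have "om x = gg x" if "x \<in> {2<..}" for x using that by (simp add: om_def)
    then show ?thesis
      using has_field_derivative_transform_within_open[OF d, of "{2<..}" om] 1 by auto
  next
    case 2
    have "DERIV gg (- t) :> sqrt ((-t)\<^sup>2 - 4) / 2" using 2 by (intro gg_deriv) simp
    then have "DERIV (\<lambda>x. gg (- x)) t :> - (sqrt ((-t)\<^sup>2 - 4) / 2)" using DERIV_mirror by blast
    then have d: "DERIV (\<lambda>x. gg (- x)) t :> omd t" using 2 by (simp add: omd_def)
    have "om x = gg (- x)" if "x \<in> {..<-2}" for x using that by (simp add: om_def)
    then show ?thesis
      using has_field_derivative_transform_within_open[OF d, of "{..<-2}" om] 2 by auto
  next
    case 3
    have n: "\<not> t > 2" "\<not> t < -2" using 3 by auto
    have d: "DERIV (\<lambda>_. 0) t :> omd t" using n by (simp add: omd_def)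
    have "om x = 0" if "x \<in> {-2<..<2}" for x
    proof -
      have "\<bar>x\<bar> \<le> 2" using that by auto
      then show ?thesis by (simp add: om_def)
    qed
    then show ?thesis
    proof -
      have "t \<in> {-2<..<2}" using 3 by auto
      then show ?thesis using has_field_derivative_transform_within_open[OF d, of "{-2<..<2}" om] by (simp add: \<open>\<And>x. x \<in> {-2<..<2} \<Longrightarrow> om x = 0\<close>)
    qed
  next
    case 4
    then show ?thesis using om_deriv2 by (simp add: omd_def)
  next
    case 5
    have a: "DERIV om (- (-2)) :> 0" using om_deriv2 by simp
    have "DERIV (\<lambda>x. om (- x)) (-2) :> - 0" using DERIV_mirror[THEN iffD1, OF a] .
    moreover have "(\<lambda>x. om (- x)) = om" using om_even by (rule ext)
    ultimately show ?thesis using 5 by (simp add: omd_def)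
  qed
qed

lemma omd_mono: "s \<le> t \<Longrightarrow> omd s \<le> omd t"
proof -
  assume st: "s \<le> t"
  have A: "sqrt (s\<^sup>2 - 4) \<le> sqrt (t\<^sup>2 - 4)" if "2 < s" "s \<le> t"
  proof -
    have "s\<^sup>2 \<le> t\<^sup>2" using that by (intro power_mono) auto
    then show ?thesis by simp
  qed
  have B: "sqrt (t\<^sup>2 - 4) \<le> sqrt (s\<^sup>2 - 4)" if "t < -2" "s \<le> t"
  proof -
    have "(-t)\<^sup>2 \<le> (-s)\<^sup>2" using that by (intro power_mono) auto
    then show ?thesis by simp
  qed
  consider "t > 2" | "t < -2" | "\<bar>t\<bar> \<le> 2" by linarith
  then show ?thesis
  proof cases
    case 1
    then show ?thesis
    proof (cases "s > 2")
      case True then show ?thesis using A st 1 by (simp add: omd_def)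
    next
      case False
      have t0: "0 \<le> sqrt (t\<^sup>2 - 4)" using 1 by (intro sqrt4_nonneg) simp
      have ot: "omd t = sqrt (t\<^sup>2 - 4) / 2" using 1 by (simp add: omd_def)
      show ?thesis
      proof (cases "s < -2")
        case True
        have "0 \<le> sqrt (s\<^sup>2 - 4)" using True by (intro sqrt4_nonneg) simp
        moreover have "omd s = - sqrt (s\<^sup>2 - 4) / 2" using True by (simp add: omd_def)
        ultimately show ?thesis using ot t0 by linarith
      next
        case F2: False
        have "omd s = 0" using F2 False by (simp add: omd_def)
        then show ?thesis using ot t0 by linarith
      qed
    qed
  next
    case 2
    then have "s < -2" using st by simp
    then show ?thesis using B st 2 by (simp add: omd_def)
  next
    case 3
    then show ?thesis
    proof (cases "s < -2")
      case False
      have "\<not> t > 2" "\<not> s > 2" "\<not> t < -2" using 3 st by auto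
      then show ?thesis using False by (simp add: omd_def)
    next
      case True
      have "0 \<le> sqrt (s\<^sup>2 - 4)" using True by (intro sqrt4_nonneg) simp
      moreover have "\<not> t > 2" "\<not> t < -2" using 3 by auto
      ultimately show ?thesis using True by (simp add: omd_def)
    qed
  qed
qed

lemma om_tangent: "om t \<ge> om t0 + omd t0 * (t - t0)"
proof -
  consider "t = t0" | "t0 < t" | "t < t0" by linarith
  then show ?thesis
  proof cases
    case 2
    obtain z where z: "t0 < z" "z < t" "om t - om t0 = (t - t0) * omd z"
      using MVT2[OF 2, of om omd] om_deriv by blast
    have "omd t0 \<le> omd z" using z by (intro omd_mono) simp
    then have "(t - t0) * omd t0 \<le> (t - t0) * omd z" using 2 by (intro mult_left_mono) auto
    then show ?thesis using z by (simp add: algebra_simps)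
  next
    case 3
    obtain z where z: "t < z" "z < t0" "om t0 - om t = (t0 - t) * omd z"
      using MVT2[OF 3, of om omd] om_deriv by blast
    have "omd z \<le> omd t0" using z by (intro omd_mono) simp
    then have "(t0 - t) * omd z \<le> (t0 - t) * omd t0" using 3 by (intro mult_left_mono) auto
    then show ?thesis using z by (simp add: algebra_simps)
  qed simp
qed

lemma om_nonneg: "om t \<ge> 0"
  using om_tangent[of 0 t] by (simp add: om_def omd_def)

lemma omd_alt: "omd t = (sqrt (max (t-2) 0) * sqrt (max (t+2) 0) - sqrt (max (-t-2) 0) * sqrt (max (2-t) 0)) / 2"
proof -
  consider "t > 2" | "t < -2" | "\<bar>t\<bar> \<le> 2" by linarith
  then show ?thesis
  proof cases
    case 1
    then have m: "max (-t-2) 0 = 0" "max (t-2) 0 = t - 2" "max (t+2) 0 = t + 2" by auto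
    have "sqrt (t - 2) * sqrt (t + 2) = sqrt ((t - 2) * (t + 2))" by (simp only: real_sqrt_mult)
    also have "(t - 2) * (t + 2) = t\<^sup>2 - 4" by (simp add: algebra_simps power2_eq_square)
    finally have "sqrt (t - 2) * sqrt (t + 2) = sqrt (t\<^sup>2 - 4)" .
    then show ?thesis using 1 unfolding omd_def m by simp
  next
    case 2
    then have m: "max (t-2) 0 = 0" "max (-t-2) 0 = -t - 2" "max (2-t) 0 = 2 - t" by auto
    have "sqrt (-t - 2) * sqrt (2 - t) = sqrt ((-t - 2) * (2 - t))" by (simp only: real_sqrt_mult)
    also have "(-t - 2) * (2 - t) = t\<^sup>2 - 4" by (simp add: algebra_simps power2_eq_square)
    finally have "sqrt (-t - 2) * sqrt (2 - t) = sqrt (t\<^sup>2 - 4)" .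
    then show ?thesis using 2 unfolding omd_def m by simp
  next
    case 3
    then have m: "max (t-2) 0 = 0" "max (-t-2) 0 = 0" by auto
    have n: "\<not> t > 2" "\<not> t < -2" using 3 by auto
    show ?thesis unfolding omd_def m using n by simp
  qed
qed

lemma omd_cont: "isCont omd t"
proof -
  have e: "omd = (\<lambda>t. (sqrt (max (t-2) 0) * sqrt (max (t+2) 0) - sqrt (max (-t-2) 0) * sqrt (max (2-t) 0)) / 2)"
    using omd_alt by (rule ext)
  have "isCont (\<lambda>t. (sqrt (max (t-2) 0) * sqrt (max (t+2) 0) - sqrt (max (-t-2) 0) * sqrt (max (2-t) 0)) / (2::real)) t"
    by (intro continuous_intros) auto
  then show ?thesis using e by simp
qed

lemma om_cont: "isCont om t"
  using om_deriv DERIV_isCont by blast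

definition Fab :: "real \<Rightarrow> real \<Rightarrow> real \<Rightarrow> real \<Rightarrow> real" where
  "Fab a b x y = 1/2 + 1/2 * ln (b / a) - x\<^sup>2 / 2
     - (y - a * x)\<^sup>2 / (2 * (b + a - a\<^sup>2))
     + Psi_star (y / sqrt b)"

lemma Fab_split:
  assumes b: "b > 0"
  shows "Fab a b x y = 1/2 * ln (b / a) + (- x\<^sup>2 / 2 - (y - a * x)\<^sup>2 / (2 * (b + a - a\<^sup>2)) + y\<^sup>2 / (4 * b))
           - om (y / sqrt b)"
proof -
  have "(y / sqrt b)\<^sup>2 = y\<^sup>2 / b" using b by (simp add: power_divide)
  then show ?thesis unfolding Fab_def Psi_om by simp
qed

lemma quad_bound:
  fixes a c dx dy :: real
  assumes c: "c > 0" and a: "a > 0"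
  shows "- dx\<^sup>2 / 2 - (dy - a * dx)\<^sup>2 / (2 * c) \<le> - dy\<^sup>2 / (2 * (c + a\<^sup>2))"
proof -
  have ca: "c + a\<^sup>2 > 0" using c by (simp add: add_pos_nonneg)
  have id: "(- dx\<^sup>2 / 2 - (dy - a * dx)\<^sup>2 / (2 * c)) * (2 * c * (c + a\<^sup>2))
        = - c * dy\<^sup>2 - (a * dy - (c + a\<^sup>2) * dx)\<^sup>2"
    using c by (simp add: field_simps power2_eq_square)
  have "(- dx\<^sup>2 / 2 - (dy - a * dx)\<^sup>2 / (2 * c)) * (2 * c * (c + a\<^sup>2)) \<le> - c * dy\<^sup>2"
    unfolding id by simp
  moreover have Z: "2 * c * (c + a\<^sup>2) > 0" using c ca by simp
  ultimately have "- dx\<^sup>2 / 2 - (dy - a * dx)\<^sup>2 / (2 * c) \<le> (- c * dy\<^sup>2) / (2 * c * (c + a\<^sup>2))"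
    unfolding pos_le_divide_eq[OF Z] by simp
  also have "\<dots> = - dy\<^sup>2 / (2 * (c + a\<^sup>2))" using c by simp
  finally show ?thesis .
qed

lemma Qd_bound:
  fixes a b dx dy :: real
  assumes a: "a > 0" and ba: "b > a" and c: "b + a - a\<^sup>2 > 0"
  shows "- dx\<^sup>2 / 2 - (dy - a * dx)\<^sup>2 / (2 * (b + a - a\<^sup>2)) + dy\<^sup>2 / (4 * b)
         \<le> - ((b - a) / (4 * b * (a + b))) * dy\<^sup>2"
proof -
  have "- dx\<^sup>2 / 2 - (dy - a * dx)\<^sup>2 / (2 * (b + a - a\<^sup>2)) \<le> - dy\<^sup>2 / (2 * ((b + a - a\<^sup>2) + a\<^sup>2))"
    by (rule quad_bound[OF c a])
  also have "(b + a - a\<^sup>2) + a\<^sup>2 = a + b" by simp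
  finally have "- dx\<^sup>2 / 2 - (dy - a * dx)\<^sup>2 / (2 * (b + a - a\<^sup>2)) + dy\<^sup>2 / (4 * b)
      \<le> - dy\<^sup>2 / (2 * (a + b)) + dy\<^sup>2 / (4 * b)" by simp
  also have "\<dots> = - ((b - a) / (4 * b * (a + b))) * dy\<^sup>2"
  proof -
    have gen: "- dy\<^sup>2 / (2 * s) + dy\<^sup>2 / (4 * b) = - ((b - (s - b)) / (4 * b * s)) * dy\<^sup>2"
      if "s \<noteq> 0" "b \<noteq> 0" for s b :: real
      using that by (simp add: field_simps)
    have "a + b \<noteq> 0" "b \<noteq> 0" using a ba by auto
    from gen[OF this] show ?thesis by simp
  qed
  finally show ?thesis .
qed

lemma Q_identity:
  fixes a b c x y x0 y0 :: real
  assumes "c \<noteq> 0" "b \<noteq> 0"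
  shows "- x\<^sup>2 / 2 - (y - a * x)\<^sup>2 / (2 * c) + y\<^sup>2 / (4 * b)
    = (- x0\<^sup>2 / 2 - (y0 - a * x0)\<^sup>2 / (2 * c) + y0\<^sup>2 / (4 * b))
      + (- x0 + a * (y0 - a * x0) / c) * (x - x0)
      + (- (y0 - a * x0) / c + y0 / (2 * b)) * (y - y0)
      + (- (x - x0)\<^sup>2 / 2 - ((y - y0) - a * (x - x0))\<^sup>2 / (2 * c) + (y - y0)\<^sup>2 / (4 * b))"
  using assms by (simp add: field_simps power2_eq_square)

lemma TI:
  assumes a: "a > 0" and ba: "b > a" and c: "b + a - a\<^sup>2 > 0"
    and crit: "y0 - a * x0 = (b + a - a\<^sup>2) * ((y0 / sqrt b) / 2 - omd (y0 / sqrt b)) / sqrt b"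
  shows "Fab a b x y \<le> Fab a b x0 y0 + (- x0 + a * (y0 - a * x0) / (b + a - a\<^sup>2)) * (x - x0)
            - ((b - a) / (4 * b * (a + b))) * (y - y0)\<^sup>2"
proof -
  define c where "c = b + a - a\<^sup>2"
  have cp: "c > 0" using c unfolding c_def .
  have bp: "b > 0" using a ba by simp
  define sb where "sb = sqrt b"
  have sbp: "sb > 0" unfolding sb_def using bp by simp
  have sbb: "sb * sb = b" unfolding sb_def using bp by simp
  define t where "t = y / sb"
  define t0 where "t0 = y0 / sb"
  define k where "k = (b - a) / (4 * b * (a + b))"
  define gx where "gx = - x0 + a * (y0 - a * x0) / c"
  define gy where "gy = - (y0 - a * x0) / c + y0 / (2 * b)"
  define Q0 where "Q0 = - x0\<^sup>2 / 2 - (y0 - a * x0)\<^sup>2 / (2 * c) + y0\<^sup>2 / (4 * b)"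
  define Qd where "Qd = - (x - x0)\<^sup>2 / 2 - ((y - y0) - a * (x - x0))\<^sup>2 / (2 * c) + (y - y0)\<^sup>2 / (4 * b)"
  have S1: "Fab a b x y = 1/2 * ln (b / a) + (Q0 + gx * (x - x0) + gy * (y - y0) + Qd) - om t"
    unfolding Fab_split[OF bp] Q_identity[of c b, OF _ _, folded c_def] t_def sb_def
    using cp bp unfolding Q0_def gx_def gy_def Qd_def c_def by (subst Q_identity) auto
  have S0: "Fab a b x0 y0 = 1/2 * ln (b / a) + Q0 - om t0"
    unfolding Fab_split[OF bp] t0_def sb_def Q0_def c_def by simp
  have tan: "om t \<ge> om t0 + omd t0 * (t - t0)" by (rule om_tangent)
  have Qb: "Qd \<le> - k * (y - y0)\<^sup>2"
    unfolding Qd_def k_def c_def using Qd_bound[OF a ba c] by simp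
  have gyv: "gy * (y - y0) = omd t0 * (t - t0)"
  proof -
    have e1: "(y0 - a * x0) / c = (t0 / 2 - omd t0) / sb"
      using crit cp unfolding c_def[symmetric] t0_def sb_def by (simp add: field_simps)
    have e2: "t0 / 2 / sb = y0 / (2 * b)"
      unfolding t0_def using sbb sbp by (simp add: field_simps)
    have e3: "(t0 / 2 - omd t0) / sb = t0 / 2 / sb - omd t0 / sb" by (simp add: diff_divide_distrib)
    have e4: "- (y0 - a * x0) / c = - ((y0 - a * x0) / c)" by (rule minus_divide_left[symmetric])
    have "gy = omd t0 / sb" unfolding gy_def using e1 e2 e3 e4 by linarith
    moreover have "t - t0 = (y - y0) / sb" unfolding t_def t0_def by (simp add: diff_divide_distrib)
    ultimately show ?thesis by simp
  qed
  have "Fab a b x y \<le> Fab a b x0 y0 + gx * (x - x0) - k * (y - y0)\<^sup>2"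
    using S1 S0 tan Qb gyv by linarith
  then show ?thesis unfolding gx_def k_def c_def .
qed

lemma Psi_cont: "isCont Psi_star t"
proof -
  have e: "Psi_star = (\<lambda>t. t\<^sup>2 / 4 - 1/2 - om t)" using Psi_om by (rule ext)
  have "isCont (\<lambda>t. t\<^sup>2 / 4 - 1/2 - om t) t"
    by (intro continuous_intros om_cont) auto
  then show ?thesis using e by simp
qed

lemma isCont_Psi_o [continuous_intros]: "isCont f x \<Longrightarrow> isCont (\<lambda>x. Psi_star (f x)) x"
  by (rule isCont_o2[OF _ Psi_cont])

lemma isCont_omd_o [continuous_intros]: "isCont f x \<Longrightarrow> isCont (\<lambda>x. omd (f x)) x"
  by (rule isCont_o2[OF _ omd_cont])

lemma Fab_upper:
  assumes a: "a > 0" and ba: "b > a" and c: "b + a - a\<^sup>2 > 0"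
  shows "Fab a b x y \<le> 1/2 * ln (b / a) - ((b - a) / (4 * b * (a + b))) * y\<^sup>2"
proof -
  have bp: "b > 0" using a ba by simp
  have "- x\<^sup>2 / 2 - (y - a * x)\<^sup>2 / (2 * (b + a - a\<^sup>2)) + y\<^sup>2 / (4 * b)
         \<le> - ((b - a) / (4 * b * (a + b))) * y\<^sup>2" using Qd_bound[OF a ba c] .
  moreover have "om (y / sqrt b) \<ge> 0" by (rule om_nonneg)
  ultimately show ?thesis unfolding Fab_split[OF bp] by linarith
qed

lemma exist_point:
  assumes a: "a > 0" and ba: "b > a" and c: "b + a - a\<^sup>2 > 0"
  shows "\<exists>x0 y0 g k. g > 0 \<and> k > 0 \<and> Fab a b x0 y0 = 0 \<and>
            (\<forall>x y. Fab a b x y \<le> g * (x - x0) - k * (y - y0)\<^sup>2)"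
proof -
  define c where "c = b + a - a\<^sup>2"
  have cp: "c > 0" using c unfolding c_def .
  have bp: "b > 0" using a ba by simp
  have c2b: "c < 2 * b"
  proof -
    have "a - a\<^sup>2 < a" using a by simp
    then show ?thesis unfolding c_def using ba by linarith
  qed
  define sb where "sb = sqrt b"
  have sbp: "sb > 0" unfolding sb_def using bp by simp
  have sbb: "sb * sb = b" unfolding sb_def using bp by simp
  define k where "k = (b - a) / (4 * b * (a + b))"
  have kp: "k > 0" unfolding k_def using a ba by simp
  define L where "L = 1/2 * ln (b / a)"
  have Lp: "L > 0" unfolding L_def using a ba by simp
  define X where "X y = (y - c * ((y / sb) / 2 - omd (y / sb)) / sb) / a" for y
  define h where "h y = Fab a b (X y) y" for y
  have crit: "y - a * X y = c * ((y / sb) / 2 - omd (y / sb)) / sb" for y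
    unfolding X_def using a by simp
  have omd0: "omd 0 = 0" unfolding omd_def by simp
  have om0: "om 0 = 0" unfolding om_def by simp
  have X0: "X 0 = 0" unfolding X_def using omd0 by simp
  have h0: "h 0 = L" unfolding h_def X0 Fab_def L_def Psi_om using om0 by simp
  define Yl where "Yl = - (1 + L / k)"
  have hYl: "h Yl < 0"
  proof -
    have "h Yl \<le> L - k * Yl\<^sup>2" unfolding h_def L_def k_def by (rule Fab_upper[OF a ba c])
    moreover have "k * Yl\<^sup>2 > L"
    proof -
      have "Yl\<^sup>2 = (1 + L / k)\<^sup>2" unfolding Yl_def by (rule power2_minus)
      also have "\<dots> \<ge> 1 + 2 * (L / k)" by (simp add: power2_eq_square algebra_simps)
      finally have "k * Yl\<^sup>2 \<ge> k * (1 + 2 * (L / k))" using kp by simp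
      also have "k * (1 + 2 * (L / k)) = k + 2 * L" using kp by (simp add: field_simps)
      finally show ?thesis using kp Lp by linarith
    qed
    ultimately show ?thesis by linarith
  qed
  have Ylneg: "Yl \<le> 0"
  proof -
    have "L / k > 0" using Lp kp by simp
    then show ?thesis unfolding Yl_def by linarith
  qed
  have cont: "\<forall>y. Yl \<le> y \<and> y \<le> 0 \<longrightarrow> isCont h y"
  proof (intro allI impI)
    fix y
    have an: "a \<noteq> 0" "sb \<noteq> 0" "2 * c \<noteq> 0" "sqrt b \<noteq> 0" using a sbp cp bp by auto
    have XC: "isCont X y"
      unfolding X_def[abs_def] by (intro continuous_intros) (use an in auto)
    have "isCont (\<lambda>y. 1/2 + 1/2 * ln (b / a) - (X y)\<^sup>2 / 2
     - (y - a * X y)\<^sup>2 / (2 * (b + a - a\<^sup>2)) + Psi_star (y / sqrt b)) y"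
      by (intro continuous_intros XC) (use an in \<open>auto simp: c_def\<close>)
    then show "isCont h y" unfolding h_def[abs_def] Fab_def .
  qed
  obtain y0 where y0: "Yl \<le> y0" "y0 \<le> 0" "h y0 = 0"
    using IVT[of h Yl 0 0] hYl h0 Lp Ylneg cont by force
  have y0n: "y0 < 0" using y0 h0 Lp by (cases "y0 = 0") auto
  define x0 where "x0 = X y0"
  define g where "g = - x0 + a * (y0 - a * x0) / c"
  have TI0: "Fab a b x y \<le> Fab a b x0 y0 + g * (x - x0) - k * (y - y0)\<^sup>2" for x y
    unfolding g_def k_def c_def
    by (rule TI[OF a ba c]) (use crit[of y0] in \<open>simp add: x0_def c_def sb_def\<close>)
  have F0: "Fab a b x0 y0 = 0" using y0(3) unfolding h_def x0_def .
  have x0n: "x0 < 0"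
  proof -
    define t0 where "t0 = y0 / sb"
    have t0n: "t0 < 0" unfolding t0_def using y0n sbp by (simp add: divide_neg_pos)
    have "omd t0 \<le> omd 0" using t0n by (intro omd_mono) simp
    then have om_le: "c * omd t0 / sb \<le> 0" using omd0 cp sbp by (simp add: divide_nonpos_pos mult_nonneg_nonpos)
    have "a * x0 = y0 - c * (t0 / 2 - omd t0) / sb" using crit[of y0] unfolding x0_def t0_def by simp
    also have "\<dots> = y0 * (1 - c / (2 * b)) + c * omd t0 / sb"
    proof -
      have e1: "t0 / sb = y0 / b" unfolding t0_def using sbb by (simp add: divide_divide_eq_left)
      have e2: "c * (t0 / 2 - omd t0) / sb = c / 2 * (t0 / sb) - c * omd t0 / sb"
        by (simp add: algebra_simps diff_divide_distrib)
      have e3: "y0 * (1 - c / (2 * b)) = y0 - c / 2 * (y0 / b)" by (simp add: algebra_simps)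
      show ?thesis using e1 e2 e3 by simp
    qed
    finally have ax: "a * x0 = y0 * (1 - c / (2 * b)) + c * omd t0 / sb" .
    have "c / (2 * b) < 1" using c2b bp by simp
    then have "y0 * (1 - c / (2 * b)) < 0" using y0n by (simp add: mult_neg_pos)
    then have "a * x0 < 0" using ax om_le by linarith
    then show ?thesis using a by (simp add: mult_less_0_iff)
  qed
  have gp: "g > 0"
  proof -
    have "L \<le> 0 + g * (0 - x0) - k * (0 - y0)\<^sup>2" using TI0[of 0 0] F0 h0 unfolding h_def X0 by simp
    moreover have "k * (0 - y0)\<^sup>2 \<ge> 0" using kp by simp
    ultimately have "g * (0 - x0) > 0" using Lp by linarith
    then have "g * x0 < 0" by simp
    then show ?thesis using x0n by (simp add: mult_less_0_iff)
  qed
  show ?thesis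
    using gp kp F0 TI0 by (intro exI[of _ x0] exI[of _ y0] exI[of _ g] exI[of _ k]) simp
qed

theorem lemma3p2:
  fixes \<gamma> :: "nat \<Rightarrow> real"
  assumes summ: "summable (\<lambda>p. (if 2 \<le> p then 2 ^ p * (\<gamma> p)\<^sup>2 else 0))"
    and norm: "xi \<gamma> 1 = 1"
    and mixture: "\<not> (\<exists>p::nat. \<forall>x. xi \<gamma> x = x ^ p)"
    and pure: "pure_like \<gamma>"
  shows "\<exists>\<alpha>>0. \<exists>\<beta>>0. \<exists>\<epsilon>0>0. \<forall>\<epsilon>. 0 < \<epsilon> \<and> \<epsilon> < \<epsilon>0 \<longrightarrow>
           (\<forall>x y. \<bar>x - mE0 \<gamma>\<bar> < \<epsilon> \<and> \<bar>y - my0 \<gamma>\<bar> \<ge> \<alpha> * sqrt \<epsilon>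
                   \<longrightarrow> Fxi \<gamma> x y < 0) \<and>
           (\<forall>x y. \<bar>x - mE0 \<gamma>\<bar> < \<epsilon> \<and> \<bar>y - my0 \<gamma>\<bar> < \<alpha> * sqrt \<epsilon>
                   \<longrightarrow> Fxi \<gamma> x y < \<beta> * sqrt \<epsilon>)"
proof -
  define a where "a = xi1 \<gamma>"
  define b where "b = xi2 \<gamma>"
  have a2: "a \<ge> 2" and bga: "b \<ge> a" and c: "b + a - a\<^sup>2 > 0"
    using xi_facts[OF summ norm mixture] unfolding a_def b_def by auto
  have a: "a > 0" using a2 by simp
  have ba: "b > a"
  proof (rule ccontr)
    assume "\<not> b > a"
    then have "b = a" using bga by simp
    then show False using pure a unfolding pure_like_def a_def[symmetric] b_def[symmetric] by simp
  qed
  have FF: "Fxi \<gamma> = Fab a b" unfolding Fxi_def[abs_def] Fab_def[abs_def] a_def b_def ..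
  obtain x0 y0 g k where gp: "g > 0" and kp: "k > 0" and F0: "Fab a b x0 y0 = 0"
    and bnd: "\<And>x y. Fab a b x y \<le> g * (x - x0) - k * (y - y0)\<^sup>2"
    using exist_point[OF a ba c] by blast
  have sup0: "(SUP y. Fab a b x0 y) = 0"
  proof (rule cSup_eq_maximum)
    show "0 \<in> range (Fab a b x0)" using F0 by (metis rangeI)
    fix z assume "z \<in> range (Fab a b x0)"
    then obtain y where "z = Fab a b x0 y" by blast
    moreover have "k * (y - y0)\<^sup>2 \<ge> 0" using kp by simp
    ultimately show "z \<le> 0" using bnd[of x0 y] by simp
  qed
  have E0: "mE0 \<gamma> = x0"
    unfolding mE0_def FF
  proof (rule Least_equality)
    show "(SUP y. Fab a b x0 y) = 0" by (rule sup0)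
    fix x assume h: "(SUP y. Fab a b x y) = 0"
    show "x0 \<le> x"
    proof (rule ccontr)
      assume "\<not> x0 \<le> x"
      then have "g * (x - x0) < 0" using gp by (simp add: mult_pos_neg)
      moreover have "(SUP y. Fab a b x y) \<le> g * (x - x0)"
      proof (rule cSUP_least)
        fix y
        have "k * (y - y0)\<^sup>2 \<ge> 0" using kp by simp
        then show "Fab a b x y \<le> g * (x - x0)" using bnd[of x y] by linarith
      qed simp
      ultimately show False using h by simp
    qed
  qed
  have Y0: "my0 \<gamma> = y0"
    unfolding my0_def E0 FF
  proof (rule the_equality)
    show "\<forall>z. Fab a b x0 z \<le> Fab a b x0 y0"
    proof
      fix z
      have "k * (z - y0)\<^sup>2 \<ge> 0" using kp by simp
      then show "Fab a b x0 z \<le> Fab a b x0 y0" using bnd[of x0 z] F0 by simp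
    qed
    fix y assume "\<forall>z. Fab a b x0 z \<le> Fab a b x0 y"
    then have "0 \<le> Fab a b x0 y" using F0 by metis
    then have "k * (y - y0)\<^sup>2 \<le> 0" using bnd[of x0 y] by simp
    then have "(y - y0)\<^sup>2 \<le> 0" using kp by (simp add: mult_le_0_iff)
    then show "y = y0" by simp
  qed
  define \<alpha> where "\<alpha> = sqrt ((g + 1) / k)"
  have alp: "\<alpha> > 0" unfolding \<alpha>_def using gp kp by simp
  have al2: "\<alpha>\<^sup>2 = (g + 1) / k" unfolding \<alpha>_def using gp kp by simp
  have g1: "g + 1 > 0" using gp by simp
  have main: "\<forall>\<epsilon>. 0 < \<epsilon> \<and> \<epsilon> < 1 \<longrightarrow>
           (\<forall>x y. \<bar>x - mE0 \<gamma>\<bar> < \<epsilon> \<and> \<bar>y - my0 \<gamma>\<bar> \<ge> \<alpha> * sqrt \<epsilon>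
                   \<longrightarrow> Fxi \<gamma> x y < 0) \<and>
           (\<forall>x y. \<bar>x - mE0 \<gamma>\<bar> < \<epsilon> \<and> \<bar>y - my0 \<gamma>\<bar> < \<alpha> * sqrt \<epsilon>
                   \<longrightarrow> Fxi \<gamma> x y < (g + 1) * sqrt \<epsilon>)"
  proof (intro allI impI)
    fix \<epsilon> :: real assume eps: "0 < \<epsilon> \<and> \<epsilon> < 1"
    have se: "\<epsilon> \<le> sqrt \<epsilon>"
    proof -
      have "sqrt \<epsilon> * sqrt \<epsilon> = \<epsilon>" using eps by simp
      moreover have "sqrt \<epsilon> \<le> 1" using eps by simp
      moreover have "sqrt \<epsilon> \<ge> 0" using eps by simp
      ultimately show ?thesis by (metis mult_right_le_one_le)
    qed
    have P1: "\<forall>x y. \<bar>x - mE0 \<gamma>\<bar> < \<epsilon> \<and> \<bar>y - my0 \<gamma>\<bar> \<ge> \<alpha> * sqrt \<epsilon>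
                   \<longrightarrow> Fxi \<gamma> x y < 0"
    proof (intro allI impI)
      fix x y
      assume h: "\<bar>x - mE0 \<gamma>\<bar> < \<epsilon> \<and> \<alpha> * sqrt \<epsilon> \<le> \<bar>y - my0 \<gamma>\<bar>"
      have gx: "g * (x - x0) \<le> g * \<epsilon>"
        using h gp unfolding E0 by (intro mult_left_mono) auto
      have "(\<alpha> * sqrt \<epsilon>)\<^sup>2 \<le> \<bar>y - y0\<bar>\<^sup>2"
        using h alp eps unfolding Y0 by (intro power_mono) auto
      then have "(g + 1) / k * \<epsilon> \<le> (y - y0)\<^sup>2"
        using eps by (simp add: power_mult_distrib al2)
      then have "k * ((g + 1) / k * \<epsilon>) \<le> k * (y - y0)\<^sup>2" using kp by (intro mult_left_mono) auto
      then have "(g + 1) * \<epsilon> \<le> k * (y - y0)\<^sup>2" using kp by simp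
      then show "Fxi \<gamma> x y < 0" unfolding FF using bnd[of x y] gx eps by (simp add: algebra_simps)
    qed
    have P2: "\<forall>x y. \<bar>x - mE0 \<gamma>\<bar> < \<epsilon> \<and> \<bar>y - my0 \<gamma>\<bar> < \<alpha> * sqrt \<epsilon>
                   \<longrightarrow> Fxi \<gamma> x y < (g + 1) * sqrt \<epsilon>"
    proof (intro allI impI)
      fix x y
      assume h: "\<bar>x - mE0 \<gamma>\<bar> < \<epsilon> \<and> \<bar>y - my0 \<gamma>\<bar> < \<alpha> * sqrt \<epsilon>"
      have gx: "g * (x - x0) \<le> g * \<epsilon>"
        using h gp unfolding E0 by (intro mult_left_mono) auto
      have "g * \<epsilon> \<le> g * sqrt \<epsilon>" using se gp by (intro mult_left_mono) auto
      moreover have "g * sqrt \<epsilon> < (g + 1) * sqrt \<epsilon>" using eps by (simp add: algebra_simps)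
      moreover have "k * (y - y0)\<^sup>2 \<ge> 0" using kp by simp
      ultimately show "Fxi \<gamma> x y < (g + 1) * sqrt \<epsilon>" unfolding FF using bnd[of x y] gx by linarith
    qed
    from P1 P2 show "(\<forall>x y. \<bar>x - mE0 \<gamma>\<bar> < \<epsilon> \<and> \<bar>y - my0 \<gamma>\<bar> \<ge> \<alpha> * sqrt \<epsilon>
                   \<longrightarrow> Fxi \<gamma> x y < 0) \<and>
           (\<forall>x y. \<bar>x - mE0 \<gamma>\<bar> < \<epsilon> \<and> \<bar>y - my0 \<gamma>\<bar> < \<alpha> * sqrt \<epsilon>
                   \<longrightarrow> Fxi \<gamma> x y < (g + 1) * sqrt \<epsilon>)" by (rule conjI)
  qed
  show ?thesis
    apply (rule exI[of _ \<alpha>])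
    apply (rule conjI[OF alp])
    apply (rule exI[of _ "g + 1"])
    apply (rule conjI[OF g1])
    apply (rule exI[of _ 1])
    using main by simp
qed

end
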